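(* Let $\mathcal{C}$ be a class of $\Sigma$-algebras and assume that $\mathbf{T}_{\le 0}/{\sim_{\mathcal{C}}}$ is finite. Let $S_0 = \{s_1,\dots,s_m\} \subseteq \mathbf{T}_{\le 0}$ be such that $\mathbf{T}_{\le 0}/{\sim_{\mathcal{C}}} = \{[s_1],\dots,[s_m]\}$. Let $\dot\Sigma_0 \subseteq \dot\Sigma$ be the finite set of characters $f(t_1,\dots,t_{i-1},\_,t_{i+1},\dots,t_n)$ with $f\in\Sigma$ $n$-ary, $i\in\{1,\dots,n\}$ and $t_j\in S_0$ for all $j\ne i$. Then, if $\dot\Sigma_0^*/{\dot\sim_{\mathcal{C}}}$ is finite, $\dot\Sigma^*/{\dot\sim_{\mathcal{C}}}$ is finite.
   Context: $\Sigma$ is a finite algebraic signature and $V$ a non-empty finite set of variables; $\mathbf{T}$ is the set of $\Sigma$-terms over $V$. A $\Sigma$-algebra has a non-empty finite universe and an interpretation of each function symbol; $t \sim_{\mathcal{C}} s$ iff $t$ and $s$ evaluate equally under all valuations in all algebras in $\mathcal{C}$. $\mathrm{vo}(t)$ is the number of variable occurrences in $t$, and $\mathbf{T}_{\le k}=\{t\in\mathbf{T} : \mathrm{vo}(t)\le k\}$. $\dot\Sigma$ is the set of characters $f(t_1,\dots,t_{i-1},\_,t_{i+1},\dots,t_n)$ where $f\in\Sigma$ is $n$-ary, $i\in\{1,\dots,n\}$, and each $t_j$ ($j\ne i$) has $\mathrm{vo}(t_j)=0$. For $w\in\dot\Sigma^*$, $w[t]$ is defined by $\varepsilon[t]=t$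 and $(f(t_1,\dots,\_,\dots,t_n)\,w')[t] = f(t_1,\dots,t_{i-1},w'[t],t_{i+1},\dots,t_n)$. $w\ \dot\sim_{\mathcal{C}}\ w'$ iff $w[a]\sim_{\mathcal{C}} w'[a]$ for any variable $a\in V$ (the relation is considered on $\dot\Sigma^*$ and on its restriction to $\dot\Sigma_0^*$). *)

theory Defs
  imports Main
begin

datatype ('f, 'v) trm = Var 'v | Fun 'f "('f, 'v) trm list"

inductive_set terms :: "'f set \<Rightarrow> ('f \<Rightarrow> nat) \<Rightarrow> 'v set \<Rightarrow> ('f, 'v) trm set"
  for Sig ar V where
  var: "x \<in> V \<Longrightarrow> Var x \<in> terms Sig ar V"
| fn: "f \<in> Sig \<Longrightarrow> length ts = ar f \<Longrightarrow> (\<forall>t\<in>set ts. t \<in> terms Sig ar V)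
        \<Longrightarrow> Fun f ts \<in> terms Sig ar V"

fun vo :: "('f, 'v) trm \<Rightarrow> nat" where
  "vo (Var x) = 1"
| "vo (Fun f ts) = sum_list (map vo ts)"

definition terms_le :: "'f set \<Rightarrow> ('f \<Rightarrow> nat) \<Rightarrow> 'v set \<Rightarrow> nat \<Rightarrow> ('f, 'v) trm set" where
  "terms_le Sig ar V k = {t \<in> terms Sig ar V. vo t \<le> k}"

type_synonym ('f, 'u) alg = "'u set \<times> ('f \<Rightarrow> 'u list \<Rightarrow> 'u)"

definition is_algebra :: "'f set \<Rightarrow> ('f \<Rightarrow> nat) \<Rightarrow> ('f, 'u) alg \<Rightarrow> bool" where
  "is_algebra Sig ar A \<longleftrightarrow> fst A \<noteq> {} \<and> finite (fst A) \<and>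
     (\<forall>f\<in>Sig. \<forall>xs. length xs = ar f \<and> set xs \<subseteq> fst A \<longrightarrow> snd A f xs \<in> fst A)"

fun eval :: "('f \<Rightarrow> 'u list \<Rightarrow> 'u) \<Rightarrow> ('v \<Rightarrow> 'u) \<Rightarrow> ('f, 'v) trm \<Rightarrow> 'u" where
  "eval I \<alpha> (Var x) = \<alpha> x"
| "eval I \<alpha> (Fun f ts) = I f (map (eval I \<alpha>) ts)"

definition equiv_C :: "('f, 'u) alg set \<Rightarrow> 'v set \<Rightarrow> ('f, 'v) trm \<Rightarrow> ('f, 'v) trm \<Rightarrow> bool" where
  "equiv_C C V t s \<longleftrightarrow>
     (\<forall>A\<in>C. \<forall>\<alpha>. (\<forall>x\<in>V. \<alpha> x \<in> fst A) \<longrightarrow> eval (snd A) \<alpha> t = eval (snd A) \<alpha> s)"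

text \<open>A character f(t_1,..,t_{i-1},_,t_{i+1},..,t_n) is represented as
  (f, [t_1,..,t_{i-1}], [t_{i+1},..,t_n]).\<close>
type_synonym ('f, 'v) chr = "'f \<times> ('f, 'v) trm list \<times> ('f, 'v) trm list"

definition chars_over :: "'f set \<Rightarrow> ('f \<Rightarrow> nat) \<Rightarrow> ('f, 'v) trm set \<Rightarrow> ('f, 'v) chr set" where
  "chars_over Sig ar S = {(f, l, r). f \<in> Sig \<and> length l + 1 + length r = ar f \<and>
      set l \<subseteq> S \<and> set r \<subseteq> S}"

text \<open>dot-Sigma: side arguments are ground terms (vo = 0).\<close>
definition chars :: "'f set \<Rightarrow> ('f \<Rightarrow> nat) \<Rightarrow> 'v set \<Rightarrow> ('f, 'v) chr set" where
  "chars Sig ar V = chars_over Sig ar (terms_le Sig ar V 0)"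

fun plug :: "('f, 'v) chr list \<Rightarrow> ('f, 'v) trm \<Rightarrow> ('f, 'v) trm" where
  "plug [] t = t"
| "plug ((f, l, r) # w) t = Fun f (l @ [plug w t] @ r)"

definition dot_equiv_C :: "('f, 'u) alg set \<Rightarrow> 'v set \<Rightarrow> ('f, 'v) chr list \<Rightarrow> ('f, 'v) chr list \<Rightarrow> bool" where
  "dot_equiv_C C V w w' \<longleftrightarrow> (\<forall>a\<in>V. equiv_C C V (plug w (Var a)) (plug w' (Var a)))"

definition rel_on :: "'a set \<Rightarrow> ('a \<Rightarrow> 'a \<Rightarrow> bool) \<Rightarrow> ('a \<times> 'a) set" where
  "rel_on X R = {(x, y). x \<in> X \<and> y \<in> X \<and> R x y}"

end

theory Submission
  imports Defs
begin

definition repl :: "(('f,'v) trm \<Rightarrow> ('f,'v) trm) \<Rightarrow> ('f,'v) chr list \<Rightarrow> ('f,'v) chr list" where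
  "repl g w = map (\<lambda>(f,l,r). (f, map g l, map g r)) w"

lemma eval_repl:
  assumes "\<And>c. c \<in> set w \<Longrightarrow> \<forall>t \<in> set (fst (snd c)) \<union> set (snd (snd c)). eval I \<alpha> (g t) = eval I \<alpha> t"
  shows "eval I \<alpha> (plug (repl g w) u) = eval I \<alpha> (plug w u)"
  using assms
proof (induction w)
  case Nil
  then show ?case by (simp add: repl_def)
next
  case (Cons c w)
  obtain f l r where c: "c = (f,l,r)" by (cases c) auto
  have IH: "eval I \<alpha> (plug (repl g w) u) = eval I \<alpha> (plug w u)"
    using Cons by auto
  have hl: "map (eval I \<alpha>) (map g l) = map (eval I \<alpha>) l"
    using Cons.prems[of c] c by auto
  have hr: "map (eval I \<alpha>) (map g r) = map (eval I \<alpha>) r"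
    using Cons.prems[of c] c by auto
  have hl': "map (eval I \<alpha> \<circ> g) l = map (eval I \<alpha>) l" using hl by (simp only: map_map)
  have hr': "map (eval I \<alpha> \<circ> g) r = map (eval I \<alpha>) r" using hr by (simp only: map_map)
  show ?case using IH c by (simp add: repl_def hl' hr')
qed

theorem lemma2p12:
  fixes Sig :: "'f set" and ar :: "'f \<Rightarrow> nat" and V :: "'v set"
    and C :: "('f, 'u) alg set" and S0 :: "('f, 'v) trm set"
  assumes "finite Sig"
    and "finite V" and "V \<noteq> {}"
    and "\<forall>A\<in>C. is_algebra Sig ar A"
    and "finite (terms_le Sig ar V 0 // rel_on (terms_le Sig ar V 0) (equiv_C C V))"
    and "finite S0" and "S0 \<subseteq> terms_le Sig ar V 0"
    and "terms_le Sig ar V 0 // rel_on (terms_le Sig ar V 0) (equiv_C C V)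
         = (\<lambda>s. rel_on (terms_le Sig ar V 0) (equiv_C C V) `` {s}) ` S0"
    and "finite (lists (chars_over Sig ar S0) // rel_on (lists (chars_over Sig ar S0)) (dot_equiv_C C V))"
  shows "finite (lists (chars Sig ar V) // rel_on (lists (chars Sig ar V)) (dot_equiv_C C V))"
proof -
  let ?T = "terms_le Sig ar V 0"
  let ?E = "rel_on ?T (equiv_C C V)"
  let ?L = "lists (chars Sig ar V)"
  let ?LS = "lists (chars_over Sig ar S0)"
  let ?R = "rel_on ?L (dot_equiv_C C V)"
  let ?RS = "rel_on ?LS (dot_equiv_C C V)"
  have ex: "\<exists>s. s \<in> S0 \<and> equiv_C C V t s" if t: "t \<in> ?T" for t
  proof -
    have "?E `` {t} \<in> ?T // ?E" using t by (rule quotientI)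
    with assms(8) obtain s where s: "s \<in> S0" "?E `` {t} = ?E `` {s}" by auto
    have "(t, t) \<in> ?E" using t by (auto simp: rel_on_def equiv_C_def)
    then have "(s, t) \<in> ?E" using s(2) by auto
    then have "equiv_C C V s t" by (auto simp: rel_on_def)
    then have "equiv_C C V t s" unfolding equiv_C_def by (metis (no_types))
    then show ?thesis using s(1) by blast
  qed
  define g where "g t = (SOME s. s \<in> S0 \<and> equiv_C C V t s)" for t
  have g: "g t \<in> S0 \<and> equiv_C C V t (g t)" if "t \<in> ?T" for t
    using someI_ex[OF ex[OF that]] unfolding g_def .
  have sub: "?LS \<subseteq> ?L"
  proof -
    have "chars_over Sig ar S0 \<subseteq> chars Sig ar V"
      using assms(7) unfolding chars_def chars_over_def by blast
    then show ?thesis by (rule lists_mono)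
  qed
  have refl: "dot_equiv_C C V w w" for w by (simp add: dot_equiv_C_def equiv_C_def)
  have sym: "dot_equiv_C C V w w' \<Longrightarrow> dot_equiv_C C V w' w" for w w'
    by (simp add: dot_equiv_C_def equiv_C_def)
  have trans: "dot_equiv_C C V w w' \<Longrightarrow> dot_equiv_C C V w' w'' \<Longrightarrow> dot_equiv_C C V w w''" for w w' w''
    by (simp add: dot_equiv_C_def equiv_C_def)
  have main: "repl g w \<in> ?LS \<and> dot_equiv_C C V w (repl g w)" if w: "w \<in> ?L" for w
  proof
    show "repl g w \<in> ?LS"
    proof -
      have "c \<in> chars_over Sig ar ?T \<Longrightarrow> (\<lambda>(f,l,r). (f, map g l, map g r)) c \<in> chars_over Sig ar S0" for c
      proof -
        assume c: "c \<in> chars_over Sig ar ?T"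
        obtain f l r where cc: "c = (f,l,r)" by (cases c) auto
        have "set (map g l) \<subseteq> S0" "set (map g r) \<subseteq> S0" using c cc g by (auto simp: chars_over_def)
        then show ?thesis using c cc by (simp add: chars_over_def)
      qed
      then show ?thesis using w unfolding repl_def chars_def by auto
    qed
    show "dot_equiv_C C V w (repl g w)"
      unfolding dot_equiv_C_def equiv_C_def
    proof (intro ballI allI impI)
      fix a A and \<alpha> :: "'v \<Rightarrow> 'u"
      assume A: "A \<in> C" and \<alpha>: "\<forall>x\<in>V. \<alpha> x \<in> fst A"
      have "eval (snd A) \<alpha> (plug (repl g w) (Var a)) = eval (snd A) \<alpha> (plug w (Var a))"
      proof (rule eval_repl)
        fix c assume c: "c \<in> set w"
        show "\<forall>t \<in> set (fst (snd c)) \<union> set (snd (snd c)). eval (snd A) \<alpha> (g t) = eval (snd A) \<alpha> t"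
        proof
          fix t assume t: "t \<in> set (fst (snd c)) \<union> set (snd (snd c))"
          have "c \<in> chars_over Sig ar ?T" using c w unfolding chars_def by auto
          then have "t \<in> ?T" using t unfolding chars_over_def by auto
          then have "equiv_C C V t (g t)" using g by blast
          then show "eval (snd A) \<alpha> (g t) = eval (snd A) \<alpha> t"
            using A \<alpha> by (simp add: equiv_C_def)
        qed
      qed
      then show "eval (snd A) \<alpha> (plug w (Var a)) = eval (snd A) \<alpha> (plug (repl g w) (Var a))" by simp
    qed
  qed
  have eq: "?L // ?R \<subseteq> (\<lambda>X. ?R `` X) ` (?LS // ?RS)"
  proof
    fix X assume "X \<in> ?L // ?R"
    then obtain w where w: "w \<in> ?L" "X = ?R `` {w}" by (auto simp: quotient_def)
    let ?w = "repl g w"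
    have w0: "?w \<in> ?LS" "dot_equiv_C C V w ?w" using main[OF w(1)] by auto
    have "X = ?R `` (?RS `` {?w})"
    proof
      show "X \<subseteq> ?R `` (?RS `` {?w})"
      proof
        fix z assume "z \<in> X"
        then have z: "z \<in> ?L" "dot_equiv_C C V w z" using w by (auto simp: rel_on_def)
        have "?w \<in> ?RS `` {?w}" using w0 refl by (auto simp: rel_on_def)
        moreover have "(?w, z) \<in> ?R"
        proof -
          have "dot_equiv_C C V ?w z" using sym[OF w0(2)] z(2) by (rule trans)
          moreover have "?w \<in> ?L" using w0(1) sub by blast
          ultimately show ?thesis using z(1) by (simp add: rel_on_def)
        qed
        ultimately show "z \<in> ?R `` (?RS `` {?w})" by blast
      qed
    next
      show "?R `` (?RS `` {?w}) \<subseteq> X"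
      proof
        fix z assume "z \<in> ?R `` (?RS `` {?w})"
        then obtain y where y: "dot_equiv_C C V ?w y" "dot_equiv_C C V y z" "z \<in> ?L"
          by (auto simp: rel_on_def)
        have "dot_equiv_C C V w z" using trans[OF trans[OF w0(2) y(1)] y(2)] .
        then show "z \<in> X" using w y by (auto simp: rel_on_def)
      qed
    qed
    moreover have "?RS `` {?w} \<in> ?LS // ?RS" using w0(1) by (rule quotientI)
    ultimately show "X \<in> (\<lambda>X. ?R `` X) ` (?LS // ?RS)" by blast
  qed
  show ?thesis
    using finite_subset[OF eq finite_imageI[OF assms(9)]] .
qed

end
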